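(* There exist a finite-dimensional real vector space $Y$, ordered by a closed cone $Y_+$ with non-empty interior, and a linear operator $B: Y \to Y$ such that the dual semigroup $(e^{tB'})_{t\ge0}$ is individually eventually nonnegative with respect to the dual cone $Y'_+$, but $(e^{tB})_{t\ge0}$ is not individually eventually nonnegative with respect to $Y_+$. (Equivalently, the dual of an individually eventually nonnegative matrix semigroup need not be individually eventually nonnegative.)
   Context: For a finite-dimensional real vector space $X$ ordered by a closed cone $X_+$ with non-empty interior and $A: X\to X$ linear, $(e^{tA})_{t\ge0}$ is individually eventually nonnegative if for each $x\in X_+$ there is $t_0\ge0$ with $e^{tA}x\in X_+$ for all $t\ge t_0$. The dual cone is $X'_+ := \{x' \in X' : \langle x', x\rangle\ge0\ \forall x\in X_+\}$ and $A'$ is the dual operator on $X'$. *)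

theory Defs
  imports "HOL-Analysis.Analysis"
begin

definition op_exp :: "('a::real_normed_vector \<Rightarrow> 'a) \<Rightarrow> real \<Rightarrow> 'a \<Rightarrow> 'a" where
  "op_exp A t x = (\<Sum>n. (t ^ n / fact n) *\<^sub>R (A ^^ n) x)"

definition ordering_cone :: "'a::euclidean_space set \<Rightarrow> bool" where
  "ordering_cone K \<longleftrightarrow> K \<noteq> {} \<and> cone K \<and> convex K \<and> closed K \<and>
     K \<inter> uminus ` K = {0} \<and> interior K \<noteq> {}"

text \<open>Dual cone, the dual space being identified with the space itself via the
  inner product.\<close>
definition dual_cone :: "'a::real_inner set \<Rightarrow> 'a set" where
  "dual_cone K = {y. \<forall>x\<in>K. 0 \<le> inner y x}"

definition ind_ev_nonneg :: "'a::real_normed_vector set \<Rightarrow> ('a \<Rightarrow> 'a) \<Rightarrow> bool" where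
  "ind_ev_nonneg K A \<longleftrightarrow> (\<forall>x\<in>K. \<exists>t0\<ge>0. \<forall>t\<ge>t0. op_exp A t x \<in> K)"

end

theory Submission
  imports Defs
begin

lemma op_exp_nil3:
  assumes "\<And>x. A (A (A x)) = 0"
  shows "op_exp A t x = x + t *\<^sub>R A x + (t^2/2) *\<^sub>R A (A x)"
proof -
  have z: "(t ^ n / fact n) *\<^sub>R (A ^^ n) x = 0" if "n \<notin> {..<3}" for n
  proof -
    from that have "n = 3 + (n - 3)" by auto
    then have "(A ^^ n) x = (A ^^ 3) ((A ^^ (n-3)) x)" by (metis funpow_add comp_apply)
    also have "\<dots> = 0" using assms by (simp add: numeral_3_eq_3)
    finally show ?thesis by simp
  qed
  have "op_exp A t x = (\<Sum>n<3. (t ^ n / fact n) *\<^sub>R (A ^^ n) x)"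
    unfolding op_exp_def by (rule suminf_finite) (use z in auto)
  also have "\<dots> = x + t *\<^sub>R A x + (t^2/2) *\<^sub>R A (A x)"
    by (simp add: numeral_3_eq_3 numeral_2_eq_2 )
  finally show ?thesis .
qed

definition Kc :: "(real^3) set" where
  "Kc = {x. x$2^2 + x$3^2 \<le> x$1^2 \<and> 0 \<le> x$1}"

definition Bm :: "real^3 \<Rightarrow> real^3" where
  "Bm x = vector [x$3, x$3, 2*x$1 - 2*x$2]"

definition Cm :: "real^3 \<Rightarrow> real^3" where
  "Cm y = vector [2*y$3, -2*y$3, y$1 + y$2]"

lemma vec3_eq: "(x::real^3) = y \<longleftrightarrow> x$1 = y$1 \<and> x$2 = y$2 \<and> x$3 = y$3"
  by (simp add: vec_eq_iff forall_3)

lemma inner3: "inner (x::real^3) y = x$1*y$1 + x$2*y$2 + x$3*y$3"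
  by (simp add: inner_vec_def sum_3)

lemma Bm_nil: "Bm (Bm (Bm x)) = 0"
  by (simp add: Bm_def vec3_eq)

lemma Cm_nil: "Cm (Cm (Cm x)) = 0"
  by (simp add: Cm_def vec3_eq)

lemma Bm_linear: "linear Bm"
  by (rule linearI) (simp_all add: Bm_def vec3_eq algebra_simps)

lemma adj: "adjoint Bm = Cm"
  by (rule adjoint_unique) (simp add: inner3 Bm_def Cm_def algebra_simps)

lemma cs_ineq:
  fixes a b c d e f :: real
  assumes "b^2 + c^2 \<le> a^2" "0 \<le> a" "e^2 + f^2 \<le> d^2" "0 \<le> d"
  shows "\<bar>b*e + c*f\<bar> \<le> a*d"
proof -
  have eq: "(b^2+c^2)*(e^2+f^2) - (b*e + c*f)^2 = (b*f - c*e)^2"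
    by (simp add: power2_eq_square algebra_simps)
  have "(b*e + c*f)^2 \<le> (b^2+c^2)*(e^2+f^2)"
    using eq by (smt (verit) zero_le_power2)
  also have "\<dots> \<le> a^2 * d^2"
    by (rule mult_mono) (use assms in auto)
  also have "\<dots> = (a*d)^2" by (simp add: power_mult_distrib)
  finally have "(b*e + c*f)^2 \<le> (a*d)^2" .
  then have "\<bar>b*e + c*f\<bar> \<le> \<bar>a*d\<bar>" by (simp add: abs_le_square_iff)
  then show ?thesis using assms by simp
qed

lemma dual_K: "dual_cone Kc = Kc"
proof
  show "Kc \<subseteq> dual_cone Kc"
  proof
    fix y assume y: "y \<in> Kc"
    show "y \<in> dual_cone Kc" unfolding dual_cone_def
    proof (intro CollectI ballI)
      fix x assume x: "x \<in> Kc"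
      have "\<bar>y$2*x$2 + y$3*x$3\<bar> \<le> y$1 * x$1"
        by (rule cs_ineq) (use x y in \<open>auto simp: Kc_def\<close>)
      then show "0 \<le> inner y x" by (simp add: inner3)
    qed
  qed
next
  show "dual_cone Kc \<subseteq> Kc"
  proof
    fix y assume y: "y \<in> dual_cone Kc"
    define r where "r = sqrt (y$2^2 + y$3^2)"
    have r0: "0 \<le> r" by (simp add: r_def)
    have r2: "r^2 = y$2^2 + y$3^2" by (simp add: r_def)
    have "vector [r, -y$2, -y$3] \<in> Kc" using r0 r2 by (simp add: Kc_def)
    with y have "0 \<le> inner y (vector [r, -y$2, -y$3])" by (auto simp: dual_cone_def)
    hence 1: "r*r \<le> y$1 * r" using r2 by (simp add: inner3 power2_eq_square algebra_simps)
    have "vector [1, 0, 0] \<in> Kc" by (simp add: Kc_def)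
    with y have "0 \<le> inner y (vector [1, 0, 0])" by (auto simp: dual_cone_def)
    hence 2: "0 \<le> y$1" by (simp add: inner3)
    have "r \<le> y$1"
    proof (cases "r = 0")
      case True then show ?thesis using 2 by simp
    next
      case False then have "0 < r" using r0 by simp
      then show ?thesis using 1 by simp
    qed
    hence "r^2 \<le> (y$1)^2" using r0 by (simp add: power_mono)
    then show "y \<in> Kc" using 2 r2 by (simp add: Kc_def)
  qed
qed

lemma K_convex: "convex Kc"
  unfolding convex_def
proof (intro ballI allI impI)
  fix x y :: "real^3" and u w :: real
  assume x: "x \<in> Kc" and y: "y \<in> Kc" and u: "0 \<le> u" and w: "0 \<le> w" and uv: "u + w = 1"
  have cs: "\<bar>x$2*y$2 + x$3*y$3\<bar> \<le> x$1 * y$1"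
    by (rule cs_ineq) (use x y in \<open>auto simp: Kc_def\<close>)
  have e1: "(u*x$2 + w*y$2)^2 + (u*x$3 + w*y$3)^2 = u^2*(x$2^2+x$3^2) + w^2*(y$2^2+y$3^2) + 2*(u * w)*(x$2*y$2 + x$3*y$3)"
    by (simp add: power2_eq_square algebra_simps)
  have e2: "(u*x$1 + w*y$1)^2 = u^2*(x$1^2) + w^2*(y$1^2) + 2*(u * w)*(x$1*y$1)"
    by (simp add: power2_eq_square algebra_simps)
  have uv0: "0 \<le> u * w" using u w by simp
  have a: "u^2*(x$2^2+x$3^2) \<le> u^2*(x$1^2)" using x by (intro mult_left_mono) (auto simp: Kc_def)
  have b: "w^2*(y$2^2+y$3^2) \<le> w^2*(y$1^2)" using y by (intro mult_left_mono) (auto simp: Kc_def)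
  have c: "2*(u * w)*(x$2*y$2 + x$3*y$3) \<le> 2*(u * w)*(x$1*y$1)"
    using cs uv0 by (intro mult_left_mono) auto
  have "(u*x$2 + w*y$2)^2 + (u*x$3 + w*y$3)^2 \<le> (u*x$1 + w*y$1)^2"
    unfolding e1 e2 using a b c by linarith
  moreover have "0 \<le> u*x$1 + w*y$1" using x y u w by (auto simp: Kc_def)
  ultimately show "u *\<^sub>R x + w *\<^sub>R y \<in> Kc" by (simp add: Kc_def)
qed

lemma K_cone: "ordering_cone Kc"
  unfolding ordering_cone_def
proof (intro conjI)
  show "Kc \<noteq> {}" by (auto simp: Kc_def intro!: exI[of _ 0])
  show "cone Kc" unfolding cone_def
  proof (intro ballI allI impI)
    fix x :: "real^3" and c :: real assume x: "x \<in> Kc" and c: "0 \<le> c"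
    have "c^2 * (x$2^2 + x$3^2) \<le> c^2 * x$1^2" using x by (intro mult_left_mono) (auto simp: Kc_def)
    then show "c *\<^sub>R x \<in> Kc" using x c by (simp add: Kc_def power_mult_distrib algebra_simps)
  qed
  show "convex Kc" by (rule K_convex)
  show "closed Kc" unfolding Kc_def
    by (intro closed_Collect_conj closed_Collect_le continuous_intros)
  show "Kc \<inter> uminus ` Kc = {0}"
  proof
    show "{0} \<subseteq> Kc \<inter> uminus ` Kc" by (auto simp: Kc_def image_iff intro!: bexI[of _ 0])
    show "Kc \<inter> uminus ` Kc \<subseteq> {0}"
    proof
      fix x assume "x \<in> Kc \<inter> uminus ` Kc"
      then obtain y where x: "x \<in> Kc" and y: "y \<in> Kc" and xy: "x = - y" by auto
      have "x$1 = 0" using x y xy by (auto simp: Kc_def)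
      then have "x$2^2 + x$3^2 \<le> 0" using x by (simp add: Kc_def)
      then have "x$2 = 0" "x$3 = 0" by (smt (verit) zero_le_power2 power_eq_0_iff)+
      then show "x \<in> {0}" using \<open>x$1 = 0\<close> by (simp add: vec3_eq)
    qed
  qed
  show "interior Kc \<noteq> {}"
  proof -
    have "ball (vector [1,0,0]) (1/4) \<subseteq> Kc"
    proof
      fix x :: "real^3" assume "x \<in> ball (vector [1,0,0]) (1/4)"
      then have d: "norm (x - vector [1,0,0]) < 1/4" by (simp add: dist_norm norm_minus_commute)
      have "\<bar>(x - vector [1,0,0])$i\<bar> < 1/4" for i
        using component_le_norm_cart[of "x - vector [1,0,0]" i] d by linarith
      from this[of 1] this[of 2] this[of 3]
      have h: "\<bar>x$1 - 1\<bar> < 1/4" "\<bar>x$2\<bar> < 1/4" "\<bar>x$3\<bar> < 1/4" by auto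
      have "x$2^2 \<le> (1/4)^2" "x$3^2 \<le> (1/4)^2" using h
        by (simp_all add: abs_le_square_iff[symmetric] less_imp_le)
      moreover have x1: "3/4 \<le> x$1" using h(1) abs_less_iff[of "x$1 - 1" "1/4"] by linarith
      moreover have "(3/4)^2 \<le> x$1^2" using x1 by (intro power_mono) auto
      ultimately have "x$2^2 + x$3^2 \<le> x$1^2" by (simp add: power_divide)
      with x1 show "x \<in> Kc" by (simp add: Kc_def)
    qed
    then have "vector [1,0,0] \<in> interior Kc" by (auto simp: mem_interior intro!: exI[of _ "1/4"])
    then show ?thesis by auto
  qed
qed

lemma not_B: "\<not> ind_ev_nonneg Kc Bm"
proof
  assume "ind_ev_nonneg Kc Bm"
  moreover have "vector [1,0,0] \<in> Kc" by (simp add: Kc_def)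
  ultimately obtain t0 where "\<forall>t\<ge>t0. op_exp Bm t (vector [1,0,0]) \<in> Kc"
    unfolding ind_ev_nonneg_def by blast
  then have "op_exp Bm (max t0 1) (vector [1,0,0]) \<in> Kc" by simp
  moreover define t where "t = max t0 1"
  ultimately have m: "op_exp Bm t (vector [1,0,0]) \<in> Kc" by simp
  have t1: "1 \<le> t" by (simp add: t_def)
  have "op_exp Bm t (vector [1,0,0]) = vector [1 + t^2, t^2, 2*t]"
    by (simp add: op_exp_nil3[of Bm, OF Bm_nil] Bm_def vec3_eq)
  with m have "(t^2)^2 + (2*t)^2 \<le> (1+t^2)^2" by (simp add: Kc_def)
  then have "2*t^2 \<le> 1" by (simp add: power2_eq_square algebra_simps)
  moreover have "1 \<le> t^2" using t1 by (simp add: one_le_power)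
  ultimately show False by simp
qed

lemma exC: "op_exp Cm t y = vector [y$1 + 2*t*y$3 + t^2*(y$1+y$2), y$2 - 2*t*y$3 - t^2*(y$1+y$2), y$3 + t*(y$1+y$2)]"
  unfolding op_exp_nil3[of Cm, OF Cm_nil] vec3_eq
  by (simp add: Cm_def) (simp add: algebra_simps power2_eq_square)

lemma C_ok: "ind_ev_nonneg Kc Cm"
  unfolding ind_ev_nonneg_def
proof
  fix y assume y: "y \<in> Kc"
  define q where "q = y$1 + y$2"
  have yK: "y$2^2 + y$3^2 \<le> y$1^2" "0 \<le> y$1" using y by (auto simp: Kc_def)
  have "y$2^2 \<le> y$1^2" using yK zero_le_power2[of "y$3"] by linarith
  then have "\<bar>y$2\<bar> \<le> \<bar>y$1\<bar>" by (simp add: abs_le_square_iff)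
  then have a2: "\<bar>y$2\<bar> \<le> y$1" using yK by simp
  have s0: "0 \<le> q" using a2 by (simp add: q_def)
  have ex: "op_exp Cm t y = vector [y$1 + 2*t*y$3 + t^2*q, y$2 - 2*t*y$3 - t^2*q, y$3 + t*q]" for t
    by (simp add: exC q_def)
  have Q: "(y$1 + 2*t*y$3 + t^2*q)^2 - (y$2 - 2*t*y$3 - t^2*q)^2 - (y$3 + t*q)^2
           = (t*q + y$3)^2 - 2*y$3^2 + q*(y$1 - y$2)" for t
    by (simp add: q_def power2_eq_square algebra_simps)
  show "\<exists>t0\<ge>0. \<forall>t\<ge>t0. op_exp Cm t y \<in> Kc"
  proof (cases "q = 0")
    case True
    then have "y$1 = - y$2" by (simp add: q_def eq_neg_iff_add_eq_0)
    then have "y$3^2 \<le> 0" using yK(1) by simp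
    then have "y$3 = 0" by simp
    then have "op_exp Cm t y = y" for t using True by (simp add: ex vec3_eq)
    then show ?thesis using y by auto
  next
    case False
    then have sp: "0 < q" using s0 by simp
    show ?thesis
    proof (intro exI[of _ "3*\<bar>y$3\<bar>/q"] conjI allI impI)
      show "0 \<le> 3*\<bar>y$3\<bar>/q" using sp by simp
      fix t assume "3*\<bar>y$3\<bar>/q \<le> t"
      then have ts: "3*\<bar>y$3\<bar> \<le> t*q" using sp by (simp add: divide_le_eq)
      have "0 \<le> t*q" using ts abs_ge_zero[of "y$3"] by linarith
      then have t0: "0 \<le> t" using sp by (simp add: zero_le_mult_iff)
      have p1: "2*\<bar>y$3\<bar> \<le> t*q + y$3" using ts by linarith
      have "(2*\<bar>y$3\<bar>)^2 \<le> (t*q + y$3)^2" using p1 by (intro power_mono) auto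
      moreover have "(2*\<bar>y$3\<bar>)^2 = 4*y$3^2" by (simp add: power_mult_distrib)
      ultimately have "2*y$3^2 \<le> (t*q + y$3)^2" using zero_le_power2[of "y$3"] by linarith
      moreover have "0 \<le> q*(y$1 - y$2)" using s0 a2 by simp
      ultimately have q: "(y$2 - 2*t*y$3 - t^2*q)^2 + (y$3 + t*q)^2 \<le> (y$1 + 2*t*y$3 + t^2*q)^2"
        using Q[of t] by linarith
      have "2*t*\<bar>y$3\<bar> \<le> t^2*q"
      proof -
        have "t*(3*\<bar>y$3\<bar>) \<le> t*(t*q)" using ts t0 by (intro mult_left_mono)
        moreover have "0 \<le> t*\<bar>y$3\<bar>" using t0 by simp
        ultimately show ?thesis by (simp add: power2_eq_square algebra_simps)
      qed
      moreover have "t*(-\<bar>y$3\<bar>) \<le> t*y$3" using t0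
        by (intro mult_left_mono) auto
      ultimately have "0 \<le> y$1 + 2*t*y$3 + t^2*q" using yK by linarith
      with q show "op_exp Cm t y \<in> Kc" by (simp add: ex Kc_def)
    qed
  qed
qed

theorem mainTheorem7:
  shows "\<exists>(K :: (real^3) set) (B :: real^3 \<Rightarrow> real^3).
           ordering_cone K \<and> linear B \<and>
           ind_ev_nonneg (dual_cone K) (adjoint B) \<and>
           \<not> ind_ev_nonneg K B"
proof (intro exI conjI)
  show "ordering_cone Kc" by (rule K_cone)
  show "linear Bm" by (rule Bm_linear)
  show "ind_ev_nonneg (dual_cone Kc) (adjoint Bm)" unfolding dual_K adj by (rule C_ok)
  show "\<not> ind_ev_nonneg Kc Bm" by (rule not_B)
qed

end
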